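(* Let $\phi\in(0,1)$ and $h_G>1$. For $b\in(0,1)$ define $g(x,b)=\frac{x^{1-b}-(1-x)^{1-b}}{x(1-x)^{1-b}-(1-x)x^{1-b}}$ for $x\in(\tfrac12,1)$, $g(\tfrac12,b)=\frac2b-2$, and $g(1,b)=+\infty$. Then: (i) $g(x,b)$ is continuous on $x\in[\tfrac12,1]$ (as an extended-real-valued function); (ii) $g(x,b)$ is increasing in $x$ and decreasing in $b$; (iii) if $\frac{2}{\phi(h_G-1)+2}<b<1$, then the equation $g(x,b)=\phi(h_G-1)$ has a unique solution $\hat x(\phi,h_G,b)\in(\tfrac12,1)$, and $\hat x(\phi,h_G,b)$ is increasing with respect to each of $b$, $h_G$, and $\phi$. *)

theory Defs
  imports "HOL-Analysis.Analysis"
begin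

definition g :: "real \<Rightarrow> real \<Rightarrow> ereal" where
  "g x b = (if x = 1 then \<infinity>
            else if x = 1/2 then ereal (2 / b - 2)
            else ereal ((x powr (1 - b) - (1 - x) powr (1 - b)) /
                        (x * (1 - x) powr (1 - b) - (1 - x) * x powr (1 - b))))"

definition xhat :: "real \<Rightarrow> real \<Rightarrow> real \<Rightarrow> real" where
  "xhat phi hG b = (THE x. x \<in> {1/2<..<1} \<and> g x b = ereal (phi * (hG - 1)))"

definition admissible :: "real \<Rightarrow> real \<Rightarrow> real \<Rightarrow> bool" where
  "admissible phi hG b \<longleftrightarrow> 0 < phi \<and> phi < 1 \<and> 1 < hG \<and>
     2 / (phi * (hG - 1) + 2) < b \<and> b < 1"

end

theory Submission
  imports Defs "HOL-Real_Asymp.Real_Asymp"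
begin


lemma phi_pos:
  fixes p q z :: real
  assumes "0 < q" "q < p" "0 < z"
  shows "q * sinh (p*z) * cosh (q*z) < p * cosh (p*z) * sinh (q*z)"
proof -
  define \<phi> where "\<phi> t = p * cosh (p*t) * sinh (q*t) - q * sinh (p*t) * cosh (q*t)" for t
  have d: "DERIV \<phi> t :> (p^2 - q^2) * sinh (p*t) * sinh (q*t)" for t
    unfolding \<phi>_def
    by (auto intro!: derivative_eq_intros simp: algebra_simps power2_eq_square)
  obtain t where t: "0 < t" "t < z" "\<phi> z - \<phi> 0 = (z - 0) * ((p^2 - q^2) * sinh (p*t) * sinh (q*t))"
    using MVT2[OF assms(3) d] by blast
  have "p^2 - q^2 > 0" using assms by (simp add: power2_eq_square mult_strict_mono)
  moreover have "sinh (p*t) > 0" "sinh (q*t) > 0" using assms t by auto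
  ultimately have "\<phi> z > 0" using t assms by (simp add: \<phi>_def)
  then show ?thesis by (simp add: \<phi>_def)
qed

lemma R_mono:
  fixes p q y1 y2 :: real
  assumes "0 < q" "q < p" "0 < y1" "y1 < y2"
  shows "sinh (p*y1) / sinh (q*y1) < sinh (p*y2) / sinh (q*y2)"
proof -
  define R where "R t = sinh (p*t) / sinh (q*t)" for t
  have d: "DERIV R t :> (p * cosh (p*t) * sinh (q*t) - q * sinh (p*t) * cosh (q*t)) / (sinh (q*t))^2"
    if "y1 \<le> t" for t
  proof -
    have "sinh (q*t) \<noteq> 0" using assms that by auto
    then show ?thesis unfolding R_def
      by (auto intro!: derivative_eq_intros simp: algebra_simps power2_eq_square)
  qed
  obtain t where t: "y1 < t" "t < y2"
    "R y2 - R y1 = (y2 - y1) * ((p * cosh (p*t) * sinh (q*t) - q * sinh (p*t) * cosh (q*t)) / (sinh (q*t))^2)"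
    using MVT2[OF assms(4) d] by blast
  have "q * sinh (p*t) * cosh (q*t) < p * cosh (p*t) * sinh (q*t)"
    using phi_pos[of q p t] assms t by auto
  moreover have "(sinh (q*t))^2 > 0" using assms t by simp
  ultimately have "0 < (y2 - y1) * ((p * cosh (p*t) * sinh (q*t) - q * sinh (p*t) * cosh (q*t)) / (sinh (q*t))^2)"
    using t by (intro mult_pos_pos divide_pos_pos) auto
  then have "R y2 - R y1 > 0" using t(3) by linarith
  then show ?thesis by (simp add: R_def)
qed

lemma R_gt:
  fixes p q y :: real
  assumes "0 < q" "q < p" "0 < y"
  shows "p / q < sinh (p*y) / sinh (q*y)"
proof -
  define \<psi> where "\<psi> t = q * sinh (p*t) - p * sinh (q*t)" for t
  have d: "DERIV \<psi> t :> p * q * (cosh (p*t) - cosh (q*t))" for t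
    unfolding \<psi>_def
    by (auto intro!: derivative_eq_intros simp: algebra_simps)
  obtain t where t: "0 < t" "t < y" "\<psi> y - \<psi> 0 = (y - 0) * (p * q * (cosh (p*t) - cosh (q*t)))"
    using MVT2[OF assms(3) d] by blast
  have "q * t < p * t" using assms t by simp
  then have "cosh (q*t) < cosh (p*t)"
    using cosh_real_nonneg_le_iff[of "p*t" "q*t"] assms t by auto
  then have "\<psi> y > 0" using t assms by (simp add: \<psi>_def)
  then have "p * sinh (q*y) < q * sinh (p*y)" by (simp add: \<psi>_def)
  moreover have "sinh (q*y) > 0" using assms by auto
  ultimately show ?thesis using assms by (simp add: field_simps)
qed

lemma R_anti_b:
  fixes y b1 b2 :: real
  assumes "0 < y" "0 < b1" "b1 < b2" "b2 < 1"
  shows "sinh ((2-b2)*y) / sinh (b2*y) < sinh ((2-b1)*y) / sinh (b1*y)"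
proof -
  have a: "sinh ((2-b2)*y) < sinh ((2-b1)*y)"
    using assms sinh_real_strict_mono by (simp add: strict_mono_less)
  have c: "sinh (b1*y) < sinh (b2*y)"
    using assms sinh_real_strict_mono by (simp add: strict_mono_less)
  have p1: "sinh (b1*y) > 0" "sinh ((2-b2)*y) > 0" using assms by auto
  have "sinh ((2-b2)*y) * sinh (b1*y) < sinh ((2-b1)*y) * sinh (b2*y)"
    using a c p1 by (intro mult_strict_mono) auto
  then show ?thesis using p1 c by (simp add: field_simps)
qed

lemma half_div: "(A::real)/2/(B/2) = A/B"
  by (simp add: divide_divide_eq_left)

lemma F_eq:
  fixes x b :: real
  assumes "1/2 < x" "x < 1" "0 < b" "b < 1"
  shows "(x powr (1-b) - (1-x) powr (1-b)) / (x*(1-x) powr (1-b) - (1-x)*x powr (1-b))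
       = sinh ((2-b) * (ln (x/(1-x))/2)) / sinh (b * (ln (x/(1-x))/2)) - 1"
proof -
  define L where "L = ln x"
  define M where "M = ln (1-x)"
  define y where "y = (L - M)/2"
  define c where "c = -(L + M)/2"
  define a where "a = 1 - b"
  define u where "u = exp y"
  define v where "v = exp c"
  define w where "w = exp (a*y)"
  define z where "z = exp (a*c)"
  have x0: "x > 0" "1 - x > 0" using assms by auto
  have Y: "ln (x/(1-x))/2 = y" using x0 by (simp add: y_def L_def M_def ln_div)
  have pos: "u > 0" "v > 0" "w > 0" "z > 0" by (auto simp: u_def v_def w_def z_def)
  have xe: "x = u / v"
  proof -
    have "x = exp L" using x0 by (simp add: L_def)
    also have "L = y - c" unfolding y_def c_def by (simp add: field_simps)
    finally show ?thesis by (simp add: u_def v_def exp_diff)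
  qed
  have x1e: "1 - x = 1 / (u * v)"
  proof -
    have "1 - x = exp M" using x0 by (simp add: M_def)
    also have "M = -y - c" unfolding y_def c_def by (simp add: field_simps)
    finally show ?thesis by (simp add: u_def v_def exp_diff exp_minus field_simps)
  qed
  have xa: "x powr a = w / z"
  proof -
    have "x powr a = exp (a * L)" using x0 by (simp add: powr_def L_def)
    also have "a * L = a*y - a*c" unfolding y_def c_def by (simp add: field_simps)
    finally show ?thesis by (simp add: w_def z_def exp_diff)
  qed
  have x1a: "(1-x) powr a = 1 / (w * z)"
  proof -
    have "(1-x) powr a = exp (a * M)" using x0 by (simp add: powr_def M_def)
    also have "a * M = -(a*y) - a*c" unfolding y_def c_def by (simp add: field_simps)
    finally show ?thesis by (simp add: w_def z_def exp_diff exp_minus field_simps)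
  qed
  have ve: "v = u + 1/u"
  proof -
    have "u / v + 1 / (u * v) = 1" by (simp only: xe[symmetric] x1e[symmetric])
    then show ?thesis using pos by (simp add: field_simps)
  qed
  have s1: "sinh ((2-b)*y) = (u*w - 1/(u*w))/2"
  proof -
    have "(2-b)*y = y + a*y" by (simp add: a_def algebra_simps)
    show ?thesis unfolding \<open>(2-b)*y = y + a*y\<close> sinh_field_def exp_add exp_minus u_def w_def
      by (simp add: field_simps)
  qed
  have s2: "sinh (b*y) = (u/w - w/u)/2"
  proof -
    have "b*y = y - a*y" by (simp add: a_def algebra_simps)
    show ?thesis unfolding \<open>b*y = y - a*y\<close> sinh_field_def exp_diff exp_minus u_def w_def
      by (simp add: field_simps)
  qed
  have yp: "y > 0"
  proof -
    have "x/(1-x) > 1" using assms by (simp add: field_simps)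
    then have "ln (x/(1-x)) > 0" by simp
    then show ?thesis using Y by simp
  qed
  have "w < u" using yp assms by (simp add: u_def w_def a_def)
  have "w*w < u*u" using \<open>w < u\<close> pos by (intro mult_strict_mono) auto
  then have nz2: "u*u - w*w \<noteq> 0" "u*u \<noteq> w*w" by simp_all
  have nz: "u/w - w/u \<noteq> 0" using pos nz2 by (simp add: field_simps)
  have e1: "(x powr (1-b) - (1-x) powr (1-b)) / (x*(1-x) powr (1-b) - (1-x)*x powr (1-b))
      = (x powr a - (1-x) powr a) / (x*(1-x) powr a - (1-x)*x powr a)" by (simp add: a_def)
  have e2: "x*(1-x) powr a - (1-x)*x powr a = (u/v)*(1/(w*z)) - (1 / (u * v))*(w/z)"
    unfolding xa x1a by (metis xe x1e)
  have e3: "x powr a - (1-x) powr a = w/z - 1/(w*z)" unfolding xa x1a ..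
  have e4: "(w/z - 1/(w*z)) / ((u/v)*(1/(w*z)) - (1 / (u * v))*(w/z))
      = (u*w - 1/(u*w))/2 / ((u/w - w/u)/2) - 1"
  proof -
    have d: "(u/v)*(1/(w*z)) - (1 / (u * v))*(w/z) = (u/w - w/u)/(v * z)"
      using pos by (simp add: field_simps)
    have n: "w/z - 1/(w*z) = (w - 1/w)/z" using pos by (simp add: field_simps)
    have q: "((w - 1/w)/z) / ((u/w - w/u)/(v * z)) = v * (w - 1/w)/(u/w - w/u)"
      using pos nz by (simp add: field_simps)
    have m: "v * (w - 1/w) = (u*w - 1/(u*w)) - (u/w - w/u)"
      unfolding ve using pos by (simp add: field_simps)
    have r: "((u*w - 1/(u*w)) - (u/w - w/u)) / (u/w - w/u) = (u*w - 1/(u*w)) / (u/w - w/u) - 1"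
      using nz by (simp add: diff_divide_distrib)
    have t: "(u*w - 1/(u*w))/2 / ((u/w - w/u)/2) = (u*w - 1/(u*w)) / (u/w - w/u)"
      by (rule half_div)
    show ?thesis unfolding d n q m r t ..
  qed
  show ?thesis
    unfolding e1 e2 e3 e4 Y s1 s2 ..
qed



lemma R_lim0: "(p::real) > 0 \<Longrightarrow> q > 0 \<Longrightarrow> ((\<lambda>y. sinh (p*y) / sinh (q*y)) \<longlongrightarrow> p * inverse q) (at_right 0)"
  unfolding sinh_field_def by real_asymp
lemma R_lim:
  fixes p q :: real
  assumes "0 < p" "0 < q"
  shows "((\<lambda>y. sinh (p*y) / sinh (q*y)) \<longlongrightarrow> p/q) (at_right 0)"
  using R_lim0[OF assms] by (simp add: divide_inverse)

lemma Y_lim: "filterlim (\<lambda>x::real. ln (x/(1-x))/2) (at_right 0) (at_right (1/2))"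
  by real_asymp

lemma Y_top: "filterlim (\<lambda>x::real. ln (x/(1-x))/2) at_top (at_left 1)"
  by real_asymp

lemma cosh_top:
  fixes c :: real assumes "0 < c"
  shows "filterlim (\<lambda>y. cosh (c*y) - 1) at_top at_top"
  unfolding cosh_field_def using assms by real_asymp

lemma cosh_le_R:
  fixes y b :: real
  assumes "0 < y" "0 < b" "b < 1"
  shows "cosh (2*(1-b)*y) \<le> sinh ((2-b)*y) / sinh (b*y)"
proof -
  have e: "(2-b)*y = b*y + 2*(1-b)*y" by (simp add: algebra_simps)
  have "cosh (b*y) * sinh (2*(1-b)*y) \<ge> 0" using assms by simp
  then have "sinh (b*y) * cosh (2*(1-b)*y) \<le> sinh ((2-b)*y)"
    unfolding e sinh_add by simp
  moreover have "sinh (b*y) > 0" using assms by simp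
  ultimately show ?thesis by (simp add: le_divide_eq mult.commute)
qed

lemma F_lim:
  fixes b :: real
  assumes b: "0 < b" "b < 1"
  shows "filterlim (\<lambda>x. (x powr (1-b) - (1-x) powr(1-b))/(x*(1-x) powr(1-b) - (1-x)*x powr(1-b))) at_top (at_left 1)"
proof -
  have c: "filterlim (\<lambda>x. cosh (2*(1-b)*(ln (x/(1-x))/2)) - 1) at_top (at_left 1)"
    using filterlim_compose[OF cosh_top Y_top, of "2*(1-b)"] b by simp
  have ev: "eventually (\<lambda>x. cosh (2*(1-b)*(ln (x/(1-x))/2)) - 1 \<le>
      (x powr (1-b) - (1-x) powr(1-b))/(x*(1-x) powr(1-b) - (1-x)*x powr(1-b))) (at_left (1::real))"
    unfolding eventually_at_left_field
  proof (rule exI[of _ "1/2"], intro conjI allI impI)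
    fix x :: real assume x: "1/2 < x" "x < 1"
    have pos: "0 < ln (x/(1-x))/2"
    proof -
      have "x/(1-x) > 1" using x by (simp add: field_simps)
      then show ?thesis by simp
    qed
    show "cosh (2*(1-b)*(ln (x/(1-x))/2)) - 1 \<le>
      (x powr (1-b) - (1-x) powr(1-b))/(x*(1-x) powr(1-b) - (1-x)*x powr(1-b))"
      unfolding F_eq[OF x b] using cosh_le_R[OF pos b] by linarith
  qed simp
  show ?thesis by (rule filterlim_at_top_mono[OF c ev])
qed

lemma Y_pos:
  fixes x :: real
  assumes "1/2 < x" "x < 1"
  shows "0 < ln (x/(1-x))/2"
proof -
  have "x/(1-x) > 1" using assms by (simp add: field_simps)
  then show ?thesis by simp
qed

lemma Y_mono:
  fixes x1 x2 :: real
  assumes "1/2 < x1" "x1 < x2" "x2 < 1"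
  shows "ln (x1/(1-x1))/2 < ln (x2/(1-x2))/2"
proof -
  have "x1/(1-x1) < x2/(1-x2)" using assms by (simp add: field_simps)
  moreover have "x1/(1-x1) > 0" using assms by simp
  ultimately show ?thesis by simp
qed

lemma gI:
  assumes "1/2 < x" "x < 1" "0 < b" "b < 1"
  shows "g x b = ereal (sinh ((2-b) * (ln (x/(1-x))/2)) / sinh (b * (ln (x/(1-x))/2)) - 1)"
  using assms F_eq[OF assms] by (simp add: g_def)

lemma gF:
  assumes "1/2 < x" "x < 1"
  shows "g x b = ereal ((x powr (1-b) - (1-x) powr(1-b))/(x*(1-x) powr(1-b) - (1-x)*x powr(1-b)))"
  using assms by (simp add: g_def)

lemma g_half: "g (1/2) b = ereal (2/b - 2)" by (simp add: g_def)
lemma g_one: "g 1 b = \<infinity>" by (simp add: g_def)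

lemma g_cont:
  fixes b :: real
  assumes b: "0 < b" "b < 1"
  shows "continuous_on {1/2..1} (\<lambda>x. g x b)"
  unfolding continuous_on_eq_continuous_within
proof
  fix x0 :: real assume x0: "x0 \<in> {1/2..1}"
  define Y where "Y x = ln (x/(1-x))/2" for x :: real
  define R where "R y = sinh ((2-b)*y) / sinh (b*y)" for y
  have gR: "g x b = ereal (R (Y x) - 1)" if "1/2 < x" "x < 1" for x
    using gI[OF that b] by (simp add: R_def Y_def)
  consider "x0 = 1/2" | "x0 = 1" | "1/2 < x0" "x0 < 1" using x0 by fastforce
  then show "continuous (at x0 within {1/2..1}) (\<lambda>x. g x b)"
  proof cases
    case 1
    have lim: "(R \<longlongrightarrow> (2-b)/b) (at_right 0)"
      unfolding R_def using R_lim[of "2-b" b] b by simp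
    have "((\<lambda>x. R (Y x)) \<longlongrightarrow> (2-b)/b) (at_right (1/2))"
      by (rule filterlim_compose[OF lim Y_lim[folded Y_def]])
    then have t: "((\<lambda>x. ereal (R (Y x) - 1)) \<longlongrightarrow> ereal ((2-b)/b - 1)) (at_right (1/2))"
      by (intro tendsto_ereal tendsto_diff) auto
    have ev: "eventually (\<lambda>x. ereal (R (Y x) - 1) = g x b) (at_right (1/2::real))"
      unfolding eventually_at_right_field
      by (rule exI[of _ 1]) (auto simp: gR)
    have "(2-b)/b - 1 = 2/b - 2" using b by (simp add: field_simps)
    then have e: "ereal ((2-b)/b - 1) = g (1/2) b" by (simp add: g_half)
    have "((\<lambda>x. g x b) \<longlongrightarrow> g (1/2) b) (at_right (1/2))"
      using Lim_transform_eventually[OF t ev] unfolding e .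
    then show ?thesis
      unfolding 1 continuous_within
      using at_within_Icc_at_right[of "1/2::real" 1] by simp
  next
    case 2
    define F where "F x = (x powr (1-b) - (1-x) powr(1-b))/(x*(1-x) powr(1-b) - (1-x)*x powr(1-b))" for x :: real
    have "((\<lambda>x. ereal (F x)) \<longlongrightarrow> \<infinity>) (at_left 1)"
      unfolding tendsto_PInfty_eq_at_top F_def using F_lim[OF b] .
    moreover have "eventually (\<lambda>x. ereal (F x) = g x b) (at_left (1::real))"
      unfolding eventually_at_left_field
      by (rule exI[of _ "1/2"]) (auto simp: gF F_def)
    ultimately have "((\<lambda>x. g x b) \<longlongrightarrow> g 1 b) (at_left 1)"
      using Lim_transform_eventually by (fastforce simp: g_one)
    then show ?thesis
      unfolding 2 continuous_within
      using at_within_Icc_at_left[of "1/2::real" 1] by simp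
  next
    case 3
    have Ypos: "Y x0 > 0" using Y_pos[OF 3] by (simp add: Y_def)
    have "isCont (\<lambda>x. R (Y x) - 1) x0"
      unfolding R_def Y_def using 3 Ypos b
      by (intro continuous_intros) (auto simp: Y_def)
    then have c: "isCont (\<lambda>x. ereal (R (Y x) - 1)) x0"
      unfolding isCont_def by (rule tendsto_ereal)
    have "eventually (\<lambda>x. x \<in> {1/2<..<1}) (nhds x0)"
      using 3 by (intro eventually_nhds_in_open) auto
    then have "eventually (\<lambda>x. ereal (R (Y x) - 1) = g x b) (nhds x0)"
      by eventually_elim (auto simp: gR)
    then have "isCont (\<lambda>x. ereal (R (Y x) - 1)) x0 = isCont (\<lambda>x. g x b) x0"
      by (rule isCont_cong)
    with c have "isCont (\<lambda>x. g x b) x0" by simp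
    then show ?thesis by (rule continuous_at_imp_continuous_within)
  qed
qed

lemma g_strict_mono:
  fixes b :: real
  assumes b: "0 < b" "b < 1"
  shows "strict_mono_on {1/2..1} (\<lambda>x. g x b)"
proof (rule strict_mono_onI)
  fix x1 x2 :: real assume x: "x1 \<in> {1/2..1}" "x2 \<in> {1/2..1}" "x1 < x2"
  have bq: "b < 2 - b" using b by simp
  show "g x1 b < g x2 b"
  proof (cases "x2 = 1")
    case True
    have "x1 < 1" using x True by simp
    then have "g x1 b \<noteq> \<infinity>" unfolding g_def by auto
    then show ?thesis using True by (simp add: g_one)
  next
    case False
    then have x2: "1/2 < x2" "x2 < 1" using x by auto
    show ?thesis
    proof (cases "x1 = 1/2")
      case True
      have "(2-b)/b < sinh ((2-b) * (ln (x2/(1-x2))/2)) / sinh (b * (ln (x2/(1-x2))/2))"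
        using R_gt[OF b(1) bq Y_pos[OF x2]] .
      moreover have "(2-b)/b - 1 = 2/b - 2" using b by (simp add: field_simps)
      ultimately show ?thesis unfolding True g_half gI[OF x2 b] by simp
    next
      case False
      then have x1: "1/2 < x1" "x1 < 1" using x x2 by auto
      show ?thesis using R_mono[OF b(1) bq Y_pos[OF x1] Y_mono[OF x1(1) x(3) x2(2)]]
        by (simp add: gI[OF x1 b] gI[OF x2 b])
    qed
  qed
qed

lemma g_anti_b:
  fixes x b1 b2 :: real
  assumes x: "x \<in> {1/2..<1}" and b: "0 < b1" "b1 < b2" "b2 < 1"
  shows "g x b2 < g x b1"
proof (cases "x = 1/2")
  case True
  have "2/b2 < 2/b1" using b by (simp add: divide_strict_left_mono)
  then show ?thesis unfolding True g_half by simp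
next
  case False
  then have x1: "1/2 < x" "x < 1" using x by auto
  show ?thesis
    using R_anti_b[OF Y_pos[OF x1] b] b
    by (simp add: gI[OF x1, of b1] gI[OF x1, of b2])
qed

lemma g_le:
  fixes b x y :: real
  assumes b: "0 < b" "b < 1" and x: "x \<in> {1/2..1}" "y \<in> {1/2..1}" "y \<le> x"
  shows "g y b \<le> g x b"
proof (cases "y = x")
  case False
  then have "y < x" using x by simp
  then show ?thesis using g_strict_mono[OF b] x by (auto simp: strict_mono_on_def intro: less_imp_le)
qed simp

lemma adm_facts:
  assumes "admissible phi hG b"
  shows "0 < b" "b < 1" "0 < phi * (hG - 1)" "2/b - 2 < phi * (hG - 1)"
proof -
  have a: "0 < phi" "phi < 1" "1 < hG" "2 / (phi * (hG - 1) + 2) < b" "b < 1"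
    using assms by (auto simp: admissible_def)
  show v: "0 < phi * (hG - 1)" using a by simp
  have "0 < 2 / (phi * (hG - 1) + 2)" using v by simp
  then show b0: "0 < b" using a by linarith
  show "b < 1" using a by simp
  have "2 < b * (phi * (hG - 1) + 2)" using a(4) v by (simp add: field_simps)
  then show "2/b - 2 < phi * (hG - 1)" using b0 by (simp add: field_simps)
qed

lemma exists_unique_sol:
  assumes "admissible phi hG b"
  shows "\<exists>!x. x \<in> {1/2<..<1} \<and> g x b = ereal (phi * (hG - 1))"
proof -
  note a = adm_facts[OF assms]
  define v where "v = phi * (hG - 1)"
  have conn: "connected ((\<lambda>x. g x b) ` {1/2..1})"
    by (rule connected_continuous_image[OF g_cont[OF a(1,2)]]) simp
  have h: "g (1/2) b \<in> (\<lambda>x. g x b) ` {1/2..1}" "g 1 b \<in> (\<lambda>x. g x b) ` {1/2..1}" by auto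
  have "g (1/2) b \<le> ereal v" using a(4) by (simp add: g_half v_def)
  moreover have "ereal v \<le> g 1 b" by (simp add: g_one)
  ultimately have "ereal v \<in> (\<lambda>x. g x b) ` {1/2..1}"
    using connectedD_interval[OF conn h] by blast
  then obtain x where x: "x \<in> {1/2..1}" "g x b = ereal v" by auto
  have "x \<noteq> 1" using x by (auto simp: g_one)
  moreover have "x \<noteq> 1/2"
  proof
    assume h: "x = 1/2"
    have "g x b = ereal (2/b - 2)" unfolding h g_half ..
    then show False using x a(4) by (simp add: v_def)
  qed
  ultimately have x': "x \<in> {1/2<..<1}" using x by auto
  show ?thesis
  proof (rule ex1I[of _ x])
    show "x \<in> {1/2<..<1} \<and> g x b = ereal (phi * (hG - 1))" using x' x by (simp add: v_def)
  next
    fix y assume y: "y \<in> {1/2<..<1} \<and> g y b = ereal (phi * (hG - 1))"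
    show "y = x"
    proof (rule ccontr)
      assume "y \<noteq> x"
      then consider "y < x" | "x < y" by linarith
      then show False
      proof cases
        case 1
        have "g y b < g x b" using 1 x' y by (intro strict_mono_onD[OF g_strict_mono[OF a(1,2)]]) auto
        then show False using x y by (simp add: v_def)
      next
        case 2
        have "g x b < g y b" using 2 x' y by (intro strict_mono_onD[OF g_strict_mono[OF a(1,2)]]) auto
        then show False using x y by (simp add: v_def)
      qed
    qed
  qed
qed

lemma xhat_prop:
  assumes "admissible phi hG b"
  shows "xhat phi hG b \<in> {1/2<..<1}" "g (xhat phi hG b) b = ereal (phi * (hG - 1))"
  using theI'[OF exists_unique_sol[OF assms]] unfolding xhat_def by auto

lemma xhat_less_val:
  assumes A1: "admissible phi1 hG1 b" and A2: "admissible phi2 hG2 b"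
    and lt: "phi1 * (hG1 - 1) < phi2 * (hG2 - 1)"
  shows "xhat phi1 hG1 b < xhat phi2 hG2 b"
proof (rule ccontr)
  assume "\<not> ?thesis"
  then have le: "xhat phi2 hG2 b \<le> xhat phi1 hG1 b" by simp
  note a = adm_facts[OF A1]
  have "g (xhat phi2 hG2 b) b \<le> g (xhat phi1 hG1 b) b"
    using g_le[OF a(1,2) _ _ le] xhat_prop(1)[OF A1] xhat_prop(1)[OF A2] by auto
  then show False using xhat_prop(2)[OF A1] xhat_prop(2)[OF A2] lt by simp
qed

lemma xhat_less_b:
  assumes A1: "admissible phi hG b1" and A2: "admissible phi hG b2" and lt: "b1 < b2"
  shows "xhat phi hG b1 < xhat phi hG b2"
proof (rule ccontr)
  assume "\<not> ?thesis"
  then have le: "xhat phi hG b2 \<le> xhat phi hG b1" by simp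
  note a1 = adm_facts[OF A1] and a2 = adm_facts[OF A2]
  have x1: "xhat phi hG b1 \<in> {1/2<..<1}" by (rule xhat_prop(1)[OF A1])
  have x2: "xhat phi hG b2 \<in> {1/2<..<1}" by (rule xhat_prop(1)[OF A2])
  have "g (xhat phi hG b2) b2 \<le> g (xhat phi hG b1) b2"
    using g_le[OF a2(1,2) _ _ le] x1 x2 by auto
  also have "\<dots> < g (xhat phi hG b1) b1"
    using g_anti_b[of "xhat phi hG b1" b1 b2] x1 a1 a2 lt by auto
  finally show False using xhat_prop(2)[OF A1] xhat_prop(2)[OF A2] by simp
qed

theorem lemmaB2:
  shows "(\<forall>b\<in>{0<..<1}. continuous_on {1/2..1} (\<lambda>x. g x b))
  \<and> (\<forall>b\<in>{0<..<1}. strict_mono_on {1/2..1} (\<lambda>x. g x b))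
  \<and> (\<forall>x\<in>{1/2..<1}. \<forall>b1 b2. 0 < b1 \<and> b1 < b2 \<and> b2 < 1 \<longrightarrow> g x b2 < g x b1)
  \<and> (\<forall>x\<in>{1/2..1}. \<forall>b1 b2. 0 < b1 \<and> b1 < b2 \<and> b2 < 1 \<longrightarrow> g x b2 \<le> g x b1)
  \<and> (\<forall>phi hG b. admissible phi hG b \<longrightarrow>
           (\<exists>!x. x \<in> {1/2<..<1} \<and> g x b = ereal (phi * (hG - 1))))
  \<and> (\<forall>phi hG b1 b2. admissible phi hG b1 \<and> admissible phi hG b2 \<and> b1 < b2 \<longrightarrow>
           xhat phi hG b1 < xhat phi hG b2)
  \<and> (\<forall>phi hG1 hG2 b. admissible phi hG1 b \<and> admissible phi hG2 b \<and> hG1 < hG2 \<longrightarrow>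
           xhat phi hG1 b < xhat phi hG2 b)
  \<and> (\<forall>phi1 phi2 hG b. admissible phi1 hG b \<and> admissible phi2 hG b \<and> phi1 < phi2 \<longrightarrow>
           xhat phi1 hG b < xhat phi2 hG b)"
proof (intro conjI ballI allI impI)
  fix b :: real assume "b \<in> {0<..<1}"
  then show "continuous_on {1/2..1} (\<lambda>x. g x b)" using g_cont by auto
next
  fix b :: real assume "b \<in> {0<..<1}"
  then show "strict_mono_on {1/2..1} (\<lambda>x. g x b)" using g_strict_mono by auto
next
  fix x b1 b2 :: real assume "x \<in> {1/2..<1}" "0 < b1 \<and> b1 < b2 \<and> b2 < 1"
  then show "g x b2 < g x b1" using g_anti_b by auto
next
  fix x b1 b2 :: real assume x: "x \<in> {1/2..1}" and b: "0 < b1 \<and> b1 < b2 \<and> b2 < 1"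
  show "g x b2 \<le> g x b1"
  proof (cases "x = 1")
    case True then show ?thesis by (simp add: g_one)
  next
    case False then show ?thesis using g_anti_b[of x b1 b2] x b by (auto intro: less_imp_le)
  qed
next
  fix phi hG b :: real assume "admissible phi hG b"
  then show "\<exists>!x. x \<in> {1/2<..<1} \<and> g x b = ereal (phi * (hG - 1))" by (rule exists_unique_sol)
next
  fix phi hG b1 b2 :: real
  assume "admissible phi hG b1 \<and> admissible phi hG b2 \<and> b1 < b2"
  then show "xhat phi hG b1 < xhat phi hG b2" using xhat_less_b by blast
next
  fix phi hG1 hG2 b :: real
  assume h: "admissible phi hG1 b \<and> admissible phi hG2 b \<and> hG1 < hG2"
  then have "0 < phi" by (simp add: admissible_def)
  then have "phi * (hG1 - 1) < phi * (hG2 - 1)" using h by simp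
  then show "xhat phi hG1 b < xhat phi hG2 b" using xhat_less_val h by blast
next
  fix phi1 phi2 hG b :: real
  assume h: "admissible phi1 hG b \<and> admissible phi2 hG b \<and> phi1 < phi2"
  then have "1 < hG" by (simp add: admissible_def)
  then have "phi1 * (hG - 1) < phi2 * (hG - 1)" using h by simp
  then show "xhat phi1 hG b < xhat phi2 hG b" using xhat_less_val h by blast
qed

end
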